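(* Let $n$ be even. Any quantum query algorithm that, given oracle access to $O_P$ for an arbitrary fixed-point-free involution $\sigma$ on $[n]$, outputs the single-bit descriptor of $\sigma$ with probability at least $\frac23$ must make $\Omega(n^{3/2})$ queries in the worst case.
   Context: A permutation $\sigma$ on $[n]$ is represented by its $n\times n$ permutation matrix $P$ with $P_{i,j}=1$ iff $\sigma(i)=j$, accessible only through the unitary $O_P:\lvert i,j,b\rangle\mapsto\lvert i,j,b\oplus P_{i,j}\rangle$. The single-bit descriptor of $\sigma$ is the string $z\in\{0,1\}^n$ with $z_i=\sigma(i)\bmod 2$. A fixed-point-free involution is a permutation $\sigma$ with $\sigma(\sigma(i))=i$ and $\sigma(i)\ne i$ for all $i$ (the $\mathsf{Descriptor}$ problem is computing the single-bit descriptor of such $\sigma$). *)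

theory Defs
  imports "HOL-Analysis.Analysis" "HOL-Combinatorics.Permutations"
begin

text \<open>Computational basis states of an algorithm with workspace of dimension m:
  (i, j, b, w) with i, j in [n] = {1..n}, b a bit, w < m.\<close>
type_synonym qstate = "nat \<times> nat \<times> bool \<times> nat"

definition qcarrier :: "nat \<Rightarrow> nat \<Rightarrow> qstate set" where
  "qcarrier n m = {1..n} \<times> {1..n} \<times> (UNIV :: bool set) \<times> {..<m}"

definition unitary_on :: "qstate set \<Rightarrow> (qstate \<Rightarrow> qstate \<Rightarrow> complex) \<Rightarrow> bool" where
  "unitary_on S U \<longleftrightarrow>
     (\<forall>s t. s \<notin> S \<or> t \<notin> S \<longrightarrow> U s t = 0) \<and>
     (\<forall>s\<in>S. \<forall>t\<in>S. (\<Sum>k\<in>S. cnj (U k s) * U k t) = (if s = t then 1 else 0))"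

definition apply_op :: "qstate set \<Rightarrow> (qstate \<Rightarrow> qstate \<Rightarrow> complex) \<Rightarrow> (qstate \<Rightarrow> complex) \<Rightarrow> (qstate \<Rightarrow> complex)" where
  "apply_op S U v = (\<lambda>s. \<Sum>t\<in>S. U s t * v t)"

definition basis_vec :: "qstate \<Rightarrow> qstate \<Rightarrow> complex" where
  "basis_vec s0 = (\<lambda>s. if s = s0 then 1 else 0)"

definition perm_matrix :: "(nat \<Rightarrow> nat) \<Rightarrow> nat \<Rightarrow> nat \<Rightarrow> bool" where
  "perm_matrix \<sigma> i j \<longleftrightarrow> \<sigma> i = j"

definition query_op :: "(nat \<Rightarrow> nat) \<Rightarrow> (qstate \<Rightarrow> complex) \<Rightarrow> (qstate \<Rightarrow> complex)" where
  "query_op \<sigma> v = (\<lambda>(i, j, b, w). v (i, j, b \<noteq> perm_matrix \<sigma> i j, w))"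

primrec run :: "qstate set \<Rightarrow> (nat \<Rightarrow> qstate \<Rightarrow> qstate \<Rightarrow> complex) \<Rightarrow> (nat \<Rightarrow> nat) \<Rightarrow> nat \<Rightarrow> (qstate \<Rightarrow> complex)" where
  "run S U \<sigma> 0 = apply_op S (U 0) (basis_vec (1, 1, False, 0))"
| "run S U \<sigma> (Suc k) = apply_op S (U (Suc k)) (query_op \<sigma> (run S U \<sigma> k))"

definition descriptor :: "(nat \<Rightarrow> nat) \<Rightarrow> nat \<Rightarrow> bool" where
  "descriptor \<sigma> i = (\<sigma> i mod 2 = 1)"

definition fpf_involution :: "nat \<Rightarrow> (nat \<Rightarrow> nat) \<Rightarrow> bool" where
  "fpf_involution n \<sigma> \<longleftrightarrow> \<sigma> permutes {1..n} \<and> (\<forall>i\<in>{1..n}. \<sigma> (\<sigma> i) = i \<and> \<sigma> i \<noteq> i)"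

text \<open>A T-query algorithm (workspace dimension m, unitaries U 0 .. U T, classical
  post-processing f of the measured basis state) with output an n-bit string
  (a function on {1..n}); probability that the output equals the descriptor.\<close>
definition success_prob ::
  "nat \<Rightarrow> nat \<Rightarrow> nat \<Rightarrow> (nat \<Rightarrow> qstate \<Rightarrow> qstate \<Rightarrow> complex) \<Rightarrow> (qstate \<Rightarrow> nat \<Rightarrow> bool) \<Rightarrow> (nat \<Rightarrow> nat) \<Rightarrow> real" where
  "success_prob n m T U f \<sigma> =
     (\<Sum>s\<in>{s \<in> qcarrier n m. \<forall>i\<in>{1..n}. f s i = descriptor \<sigma> i}.
        (cmod (run (qcarrier n m) U \<sigma> T s))\<^sup>2)"

definition query_algorithm :: "nat \<Rightarrow> nat \<Rightarrow> nat \<Rightarrow> (nat \<Rightarrow> qstate \<Rightarrow> qstate \<Rightarrow> complex) \<Rightarrow> bool" where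
  "query_algorithm n m T U \<longleftrightarrow> (\<forall>k\<le>T. unitary_on (qcarrier n m) (U k))"

end

theory Submission
  imports Defs
begin


definition ip :: "qstate set \<Rightarrow> (qstate \<Rightarrow> complex) \<Rightarrow> (qstate \<Rightarrow> complex) \<Rightarrow> complex" where
  "ip S v w = (\<Sum>s\<in>S. cnj (v s) * w s)"

lemma ip_apply_op:
  assumes U: "unitary_on S U" and fin: "finite S"
  shows "ip S (apply_op S U v) (apply_op S U w) = ip S v w"
proof -
  have "ip S (apply_op S U v) (apply_op S U w) =
     (\<Sum>s\<in>S. \<Sum>t'\<in>S. \<Sum>t\<in>S. cnj (v t) * w t' * (cnj (U s t) * U s t'))"
    by (simp add: ip_def apply_op_def sum_product algebra_simps)
  also have "\<dots> = (\<Sum>s\<in>S. \<Sum>t\<in>S. \<Sum>t'\<in>S. cnj (v t) * w t' * (cnj (U s t) * U s t'))"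
    by (rule sum.cong[OF refl], rule sum.swap)
  also have "\<dots> = (\<Sum>t\<in>S. \<Sum>s\<in>S. \<Sum>t'\<in>S. cnj (v t) * w t' * (cnj (U s t) * U s t'))"
    by (rule sum.swap)
  also have "\<dots> = (\<Sum>t\<in>S. \<Sum>t'\<in>S. cnj (v t) * w t' * (\<Sum>s\<in>S. cnj (U s t) * U s t'))"
    by (simp add: sum_distrib_left, subst sum.swap, rule refl)
  also have "\<dots> = (\<Sum>t\<in>S. \<Sum>t'\<in>S. cnj (v t) * w t' * (if t = t' then 1 else 0))"
    using U unfolding unitary_on_def by (intro sum.cong refl) auto
  also have "\<dots> = ip S v w"
    by (simp add: ip_def fin if_distrib cong: if_cong)
  finally show ?thesis .
qed

lemma sum_qcarrier:
  "(\<Sum>s\<in>qcarrier n m. g s) = (\<Sum>i\<in>{1..n}. \<Sum>j\<in>{1..n}. \<Sum>b\<in>UNIV. \<Sum>k<m. g (i,j,b,k))"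
  by (simp add: qcarrier_def sum.cartesian_product split_def)

lemma amgm: fixes x y e :: real assumes "e > 0"
  shows "x * y \<le> (e * x^2 + y^2 / e) / 2"
proof -
  have "0 \<le> (e * x - y)^2 / e" using assms by simp
  also have "(e * x - y)^2 / e = e * x^2 + y^2 / e - 2 * x * y"
    using assms by (simp add: field_simps power2_eq_square)
  finally show ?thesis by simp
qed

lemma sum_bool_xor: "(\<Sum>b\<in>(UNIV::bool set). h (b \<noteq> p)) = (\<Sum>b\<in>UNIV. h b)"
  by (cases p) (simp_all add: UNIV_bool add.commute)

lemma block_bound:
  fixes \<alpha> \<beta> :: "bool \<Rightarrow> nat \<Rightarrow> complex" and e :: real and p q :: bool
  assumes e: "e > 0"
  shows "cmod ((\<Sum>b\<in>(UNIV::bool set). \<Sum>k<m. cnj (\<alpha> (b \<noteq> p) k) * \<beta> (b \<noteq> q) k)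
              - (\<Sum>b\<in>UNIV. \<Sum>k<m. cnj (\<alpha> b k) * \<beta> b k))
     \<le> (if p = q then 0 else e * (\<Sum>b\<in>UNIV. \<Sum>k<m. (cmod (\<alpha> b k))^2)
                           + (\<Sum>b\<in>UNIV. \<Sum>k<m. (cmod (\<beta> b k))^2) / e)"
proof (cases "p = q")
  case True
  have "(\<Sum>b\<in>(UNIV::bool set). (\<lambda>c. \<Sum>k<m. cnj (\<alpha> c k) * \<beta> c k) (b \<noteq> q)) = (\<Sum>b\<in>(UNIV::bool set). (\<lambda>c. \<Sum>k<m. cnj (\<alpha> c k) * \<beta> c k) b)"
    by (cases q) (simp_all add: UNIV_bool add.commute)
  then show ?thesis using True by simp
next
  case False
  let ?A = "\<lambda>b k. cmod (\<alpha> b k)" and ?B = "\<lambda>b k. cmod (\<beta> b k)"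
  have pw: "\<And>b k. cmod (cnj (\<alpha> b k) * \<beta> b k) \<le> (e * (?A b k)^2 + (?B b k)^2 / e) / 2"
    unfolding norm_mult complex_mod_cnj by (rule amgm[OF e])
  have pw2: "\<And>(b::bool) k. cmod (cnj (\<alpha> (b \<noteq> p) k) * \<beta> (b \<noteq> q) k) \<le> (e * (?A (b \<noteq> p) k)^2 + (?B (b \<noteq> q) k)^2 / e) / 2"
    unfolding norm_mult complex_mod_cnj by (rule amgm[OF e])
  have s1: "cmod (\<Sum>b\<in>(UNIV::bool set). \<Sum>k<m. cnj (\<alpha> (b \<noteq> p) k) * \<beta> (b \<noteq> q) k)
      \<le> (\<Sum>b\<in>(UNIV::bool set). \<Sum>k<m. (e * (?A (b \<noteq> p) k)^2 + (?B (b \<noteq> q) k)^2 / e) / 2)"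
    by (rule order_trans[OF norm_sum sum_mono], rule order_trans[OF norm_sum sum_mono], rule pw2)
  have s2: "cmod (\<Sum>b\<in>UNIV. \<Sum>k<m. cnj (\<alpha> b k) * \<beta> b k)
      \<le> (\<Sum>b\<in>UNIV. \<Sum>k<m. (e * (?A b k)^2 + (?B b k)^2 / e) / 2)"
    by (rule order_trans[OF norm_sum sum_mono], rule order_trans[OF norm_sum sum_mono], rule pw)
  have r1: "(\<Sum>b\<in>(UNIV::bool set). \<Sum>k<m. (e * (?A (b \<noteq> p) k)^2 + (?B (b \<noteq> q) k)^2 / e) / 2)
     = (e * (\<Sum>b\<in>(UNIV::bool set). \<Sum>k<m. (?A (b \<noteq> p) k)^2) + (\<Sum>b\<in>(UNIV::bool set). \<Sum>k<m. (?B (b \<noteq> q) k)^2) / e) / 2"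
    by (simp add: sum.distrib sum_distrib_left sum_divide_distrib add_divide_distrib)
  have r2: "(\<Sum>b\<in>UNIV. \<Sum>k<m. (e * (?A b k)^2 + (?B b k)^2 / e) / 2)
     = (e * (\<Sum>b\<in>UNIV. \<Sum>k<m. (?A b k)^2) + (\<Sum>b\<in>UNIV. \<Sum>k<m. (?B b k)^2) / e) / 2"
    by (simp add: sum.distrib sum_distrib_left sum_divide_distrib add_divide_distrib)
  have x1: "(\<Sum>b\<in>(UNIV::bool set). \<Sum>k<m. (?A (b \<noteq> p) k)^2) = (\<Sum>b\<in>UNIV. \<Sum>k<m. (?A b k)^2)"
    by (cases p) (simp_all add: UNIV_bool add.commute)
  have x2: "(\<Sum>b\<in>(UNIV::bool set). \<Sum>k<m. (?B (b \<noteq> q) k)^2) = (\<Sum>b\<in>UNIV. \<Sum>k<m. (?B b k)^2)"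
    by (cases q) (simp_all add: UNIV_bool add.commute)
  have "cmod ((\<Sum>b\<in>(UNIV::bool set). \<Sum>k<m. cnj (\<alpha> (b \<noteq> p) k) * \<beta> (b \<noteq> q) k)
              - (\<Sum>b\<in>UNIV. \<Sum>k<m. cnj (\<alpha> b k) * \<beta> b k)) \<le>
     cmod (\<Sum>b\<in>(UNIV::bool set). \<Sum>k<m. cnj (\<alpha> (b \<noteq> p) k) * \<beta> (b \<noteq> q) k) + cmod (\<Sum>b\<in>UNIV. \<Sum>k<m. cnj (\<alpha> b k) * \<beta> b k)"
    by (rule norm_triangle_ineq4)
  then show ?thesis using s1 s2 r1 r2 x1 x2 False by simp
qed


definition blk :: "nat \<Rightarrow> (qstate \<Rightarrow> complex) \<Rightarrow> nat \<Rightarrow> nat \<Rightarrow> real" where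
  "blk m v i j = (\<Sum>b\<in>(UNIV::bool set). \<Sum>k<m. (cmod (v (i,j,b,k)))^2)"

lemma blk_nonneg: "blk m v i j \<ge> 0"
  unfolding blk_def by (intro sum_nonneg) auto


lemma sum_blk: "(\<Sum>i\<in>{1..n}. \<Sum>j\<in>{1..n}. blk m v i j) = (\<Sum>s\<in>qcarrier n m. (cmod (v s))^2)"
  by (simp add: blk_def sum_qcarrier)

lemma ip_self: "ip S v v = of_real (\<Sum>s\<in>S. (cmod (v s))^2)"
  unfolding ip_def of_real_sum by (intro sum.cong refl) (metis complex_norm_square mult.commute)

lemma final_bound:
  fixes a b :: "qstate \<Rightarrow> complex"
  assumes fin: "finite S" and AS: "A \<subseteq> S"
    and na: "(\<Sum>s\<in>S. (cmod (a s))^2) = 1" and nb: "(\<Sum>s\<in>S. (cmod (b s))^2) = 1"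
    and pa: "(\<Sum>s\<in>A. (cmod (a s))^2) \<ge> 2/3" and pb: "(\<Sum>s\<in>A. (cmod (b s))^2) \<le> 1/3"
  shows "cmod (ip S a b) \<le> 19/20"
proof -
  define t where "t s = (if s \<in> A then 4/5 else 5/4::real)" for s
  have tpos: "t s > 0" for s by (simp add: t_def)
  have "cmod (ip S a b) \<le> (\<Sum>s\<in>S. cmod (a s) * cmod (b s))"
    unfolding ip_def by (rule order_trans[OF norm_sum]) (simp add: norm_mult)
  also have "\<dots> \<le> (\<Sum>s\<in>S. (t s * (cmod (a s))^2 + (cmod (b s))^2 / t s) / 2)"
    by (intro sum_mono amgm tpos)
  also have "\<dots> = (\<Sum>s\<in>A. (t s * (cmod (a s))^2 + (cmod (b s))^2 / t s) / 2)
       + (\<Sum>s\<in>S-A. (t s * (cmod (a s))^2 + (cmod (b s))^2 / t s) / 2)"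
    using fin AS by (metis (no_types, lifting) add.commute sum.subset_diff)
  also have "(\<Sum>s\<in>A. (t s * (cmod (a s))^2 + (cmod (b s))^2 / t s) / 2)
      = (\<Sum>s\<in>A. 2/5 * (cmod (a s))^2 + 5/8 * (cmod (b s))^2)"
    by (intro sum.cong refl) (simp add: t_def)
  also have "\<dots> = 2/5 * (\<Sum>s\<in>A. (cmod (a s))^2) + 5/8 * (\<Sum>s\<in>A. (cmod (b s))^2)"
    by (simp add: sum.distrib sum_distrib_left)
  also have "(\<Sum>s\<in>S-A. (t s * (cmod (a s))^2 + (cmod (b s))^2 / t s) / 2)
      = (\<Sum>s\<in>S-A. 5/8 * (cmod (a s))^2 + 2/5 * (cmod (b s))^2)"
    by (intro sum.cong refl) (simp add: t_def)
  also have "\<dots> = 5/8 * (\<Sum>s\<in>S-A. (cmod (a s))^2) + 2/5 * (\<Sum>s\<in>S-A. (cmod (b s))^2)"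
    by (simp add: sum.distrib sum_distrib_left)
  also have "(\<Sum>s\<in>S-A. (cmod (a s))^2) = 1 - (\<Sum>s\<in>A. (cmod (a s))^2)"
    using fin AS na by (simp add: sum_diff)
  also have "(\<Sum>s\<in>S-A. (cmod (b s))^2) = 1 - (\<Sum>s\<in>A. (cmod (b s))^2)"
    using fin AS nb by (simp add: sum_diff)
  finally have "cmod (ip S a b) \<le> 2/5 * (\<Sum>s\<in>A. (cmod (a s))^2) + 5/8 * (\<Sum>s\<in>A. (cmod (b s))^2) +
     (5/8 * (1 - (\<Sum>s\<in>A. (cmod (a s))^2)) + 2/5 * (1 - (\<Sum>s\<in>A. (cmod (b s))^2)))" .
  moreover have "\<And>(c::real) (P::real) (Q::real). c \<le> 2/5*P + 5/8*Q + (5/8*(1-P) + 2/5*(1-Q)) \<Longrightarrow> 2/3 \<le> P \<Longrightarrow> Q \<le> 1/3 \<Longrightarrow> c \<le> 19/20"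
    unfolding right_diff_distrib by linarith
  ultimately show ?thesis using pa pb by blast
qed


lemma e1: "ip (qcarrier n m) (query_op x v) (query_op y w) = (\<Sum>i\<in>{1..n}. \<Sum>j\<in>{1..n}.
      (\<Sum>b\<in>(UNIV::bool set). \<Sum>k<m. cnj (v (i,j,b \<noteq> perm_matrix x i j,k)) * w (i,j,b \<noteq> perm_matrix y i j,k)))"
  unfolding ip_def sum_qcarrier query_op_def by simp

lemma e2: "ip (qcarrier n m) v w = (\<Sum>i\<in>{1..n}. \<Sum>j\<in>{1..n}.
       (\<Sum>b\<in>UNIV. \<Sum>k<m. cnj (v (i,j,b,k)) * w (i,j,b,k)))"
  unfolding ip_def sum_qcarrier by simp

lemma norm_sum2: fixes f :: "'a \<Rightarrow> 'b \<Rightarrow> 'c::real_normed_vector"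
  shows "norm (\<Sum>i\<in>A. \<Sum>j\<in>B. f i j) \<le> (\<Sum>i\<in>A. \<Sum>j\<in>B. norm (f i j))"
  by (rule order_trans[OF norm_sum sum_mono]) (rule norm_sum)

definition D where "D m x y v w i j = ((\<Sum>b\<in>(UNIV::bool set). \<Sum>k<m. cnj (v (i,j,b \<noteq> perm_matrix x i j,k)) * w (i,j,b \<noteq> perm_matrix y i j,k))
              - (\<Sum>b\<in>UNIV. \<Sum>k<m. cnj (v (i,j,b,k)) * w (i,j,b,k)))"

lemma diff_eq: "ip (qcarrier n m) (query_op x v) (query_op y w) - ip (qcarrier n m) v w =
    (\<Sum>i\<in>{1..n}. \<Sum>j\<in>{1..n}. D m x y v w i j)"
  unfolding e1 unfolding e2 D_def by (simp only: sum_subtractf)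

lemma D_bound: assumes "e > 0" 
  shows "cmod (D m x y v w i j) \<le> (if perm_matrix x i j = perm_matrix y i j then 0
          else e * blk m v i j + blk m w i j / e)"
  unfolding D_def blk_def
  by (rule block_bound[OF assms, where \<alpha>="\<lambda>b k. v (i,j,b,k)" and \<beta>="\<lambda>b k. w (i,j,b,k)"
        and p="perm_matrix x i j" and q="perm_matrix y i j" and m=m])

lemma query_diff:
  assumes e: "\<And>i j. e i j > 0"
  shows "cmod (ip (qcarrier n m) (query_op x v) (query_op y w) - ip (qcarrier n m) v w)
    \<le> (\<Sum>i\<in>{1..n}. \<Sum>j\<in>{1..n}. if perm_matrix x i j = perm_matrix y i j then 0
          else e i j * blk m v i j + blk m w i j / e i j)"
  unfolding diff_eq
  apply (rule order_trans[OF norm_sum2])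
  apply (rule sum_mono)+
  apply (rule D_bound[OF e])
  done

lemma ip_query_same: "ip (qcarrier n m) (query_op x v) (query_op x w) = ip (qcarrier n m) v w"
  using query_diff[of "\<lambda>i j. 1" n m x v x w] by simp


definition tr :: "nat \<Rightarrow> nat \<Rightarrow> nat \<Rightarrow> nat" where
  "tr u v i = (if i = u then v else if i = v then u else i)"

definition cj :: "(nat \<Rightarrow> nat) \<Rightarrow> nat \<Rightarrow> nat \<Rightarrow> nat \<Rightarrow> nat" where
  "cj x u v = (\<lambda>i. tr u v (x (tr u v i)))"

definition Pset :: "nat \<Rightarrow> (nat \<Rightarrow> nat) \<Rightarrow> (nat \<times> nat) set" where
  "Pset n x = {(u,v). u \<in> {1..n} \<and> v \<in> {1..n} \<and> odd u \<and> even v \<and> x u \<noteq> v}"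

lemma tr_tr [simp]: "tr u v (tr u v i) = i"
  by (simp add: tr_def)

lemma tr_other: "i \<noteq> u \<Longrightarrow> i \<noteq> v \<Longrightarrow> tr u v i = i"
  by (simp add: tr_def)

lemma tr_eq: "tr u v = Transposition.transpose u v"
  by (auto simp: fun_eq_iff tr_def Transposition.transpose_def)

lemma tr_in: "u \<in> {1..n} \<Longrightarrow> v \<in> {1..n} \<Longrightarrow> i \<in> {1..n} \<Longrightarrow> tr u v i \<in> {1..n}"
  by (simp add: tr_def)

lemma fpf_perm: "fpf_involution n x \<Longrightarrow> x permutes {1..n}"
  unfolding fpf_involution_def by (elim conjE)

lemma fpf_in: assumes "fpf_involution n x" "i \<in> {1..n}" shows "x i \<in> {1..n}"
  using permutes_in_image[OF fpf_perm[OF assms(1)], of i] assms(2) by blast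

lemma fpf_xx: assumes "fpf_involution n x" shows "x (x i) = i"
proof (cases "i \<in> {1..n}")
  case True then show ?thesis using assms unfolding fpf_involution_def by simp
next
  case False
  then have "x i = i" using fpf_perm[OF assms] by (simp add: permutes_not_in)
  then show ?thesis by simp
qed

lemma fpf_ne: "fpf_involution n x \<Longrightarrow> i \<in> {1..n} \<Longrightarrow> x i \<noteq> i"
  unfolding fpf_involution_def by simp

lemma cj_cj: "cj (cj x u v) u v = x"
  by (simp add: cj_def fun_eq_iff)

lemma cj_fpf:
  assumes x: "fpf_involution n x" and u: "u \<in> {1..n}" and v: "v \<in> {1..n}"
  shows "fpf_involution n (cj x u v)"
proof -
  have t: "tr u v permutes {1..n}" unfolding tr_eq using u v by (rule permutes_swap_id)
  have xp: "x permutes {1..n}" using x unfolding fpf_involution_def by blast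
  have "cj x u v = tr u v \<circ> (x \<circ> tr u v)" by (simp add: cj_def fun_eq_iff)
  then have p: "cj x u v permutes {1..n}"
    using permutes_compose[OF permutes_compose[OF t xp] t] by simp
  have "cj x u v (cj x u v i) = i \<and> cj x u v i \<noteq> i" if i: "i \<in> {1..n}" for i
  proof
    show "cj x u v (cj x u v i) = i" by (simp add: cj_def fpf_xx[OF x])
    have ti: "tr u v i \<in> {1..n}" using tr_in[OF u v i] .
    show "cj x u v i \<noteq> i"
    proof
      assume "cj x u v i = i"
      then have "tr u v (tr u v (x (tr u v i))) = tr u v i" unfolding cj_def by simp
      then have "x (tr u v i) = tr u v i" by simp
      then show False using fpf_ne[OF x ti] by simp
    qed
  qed
  then show ?thesis using p unfolding fpf_involution_def by blast
qed

lemma Pset_facts: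
  assumes x: "fpf_involution n x" and p: "(u,v) \<in> Pset n x"
  shows "u \<in> {1..n}" "v \<in> {1..n}" "odd u" "even v" "x u \<noteq> v" "x v \<noteq> u" "x u \<noteq> u" "x v \<noteq> v"
    "u \<noteq> v"
proof -
  show u: "u \<in> {1..n}" and v: "v \<in> {1..n}" and "odd u" "even v" and xu: "x u \<noteq> v" using p by (auto simp: Pset_def)
  show "x v \<noteq> u" using xu fpf_xx[OF x, of v] by metis
  show "x u \<noteq> u" using fpf_ne[OF x u] .
  show "x v \<noteq> v" using fpf_ne[OF x v] .
  show "u \<noteq> v" using \<open>odd u\<close> \<open>even v\<close> by auto
qed

lemma cj_Pset:
  assumes x: "fpf_involution n x" and p: "(u,v) \<in> Pset n x"
  shows "(u,v) \<in> Pset n (cj x u v)"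
proof -
  note f = Pset_facts[OF x p]
  have "cj x u v u = x v" unfolding cj_def using f by (simp add: tr_def)
  then show ?thesis using f by (simp add: Pset_def)
qed

lemma cj_desc:
  assumes x: "fpf_involution n x" and p: "(u,v) \<in> Pset n x"
  shows "x u \<in> {1..n}" "descriptor (cj x u v) (x u) \<noteq> descriptor x (x u)"
proof -
  note f = Pset_facts[OF x p]
  show "x u \<in> {1..n}" using fpf_in[OF x f(1)] .
  have "cj x u v (x u) = v" unfolding cj_def using f by (simp add: tr_def fpf_xx[OF x])
  moreover have "x (x u) = u" by (rule fpf_xx[OF x])
  moreover have "u mod 2 = 1" using f(3) by presburger
  moreover have "v mod 2 = 0" using f(4) by presburger
  ultimately show "descriptor (cj x u v) (x u) \<noteq> descriptor x (x u)"
    by (simp add: descriptor_def)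
qed

lemma C1:
  assumes x: "fpf_involution n x"
  shows "card {p \<in> Pset n x. cj x (fst p) (snd p) i \<noteq> x i} \<le> 4 * n"
proof -
  have sub: "{p \<in> Pset n x. cj x (fst p) (snd p) i \<noteq> x i} \<subseteq> ({i, x i} \<times> {1..n}) \<union> ({1..n} \<times> {i, x i})"
  proof
    fix p assume a: "p \<in> {p \<in> Pset n x. cj x (fst p) (snd p) i \<noteq> x i}"
    obtain u v where puv: "p = (u,v)" by force
    have pin: "(u,v) \<in> Pset n x" and ne: "cj x u v i \<noteq> x i" using a puv by auto
    note f = Pset_facts[OF x pin]
    have "u \<in> {i, x i} \<or> v \<in> {i, x i}"
    proof (rule ccontr)
      assume "\<not> ?thesis"
      then have "i \<noteq> u" "i \<noteq> v" "x i \<noteq> u" "x i \<noteq> v" by auto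
      then have "cj x u v i = x i" unfolding cj_def by (simp add: tr_def)
      with ne show False by simp
    qed
    then show "p \<in> ({i, x i} \<times> {1..n}) \<union> ({1..n} \<times> {i, x i})" using f puv by auto
  qed
  have "card ({i, x i} \<times> {1..n}) \<le> 2 * n"
    by (simp add: card_cartesian_product card_insert_if)
  moreover have "card ({1..n} \<times> {i, x i}) \<le> 2 * n"
    by (simp add: card_cartesian_product card_insert_if)
  ultimately have "card (({i, x i} \<times> {1..n}) \<union> ({1..n} \<times> {i, x i})) \<le> 4 * n"
    using card_Un_le[of "{i, x i} \<times> {1..n}" "{1..n} \<times> {i, x i}"] by linarith
  moreover have fin: "finite (({i, x i} \<times> {1..n}) \<union> ({1..n} \<times> {i, x i}))" by simp
  ultimately show ?thesis using card_mono[OF fin sub] by linarith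
qed

lemma C2:
  assumes x: "fpf_involution n x"
  shows "card {p \<in> Pset n x. cj x (fst p) (snd p) i = j \<and> x i \<noteq> j} \<le> 4"
proof -
  have sub: "{p \<in> Pset n x. cj x (fst p) (snd p) i = j \<and> x i \<noteq> j} \<subseteq> set [(i, x j), (x j, i), (x i, j), (j, x i)]"
  proof
    fix p assume a: "p \<in> {p \<in> Pset n x. cj x (fst p) (snd p) i = j \<and> x i \<noteq> j}"
    obtain u v where puv: "p = (u,v)" by force
    have pin: "(u,v) \<in> Pset n x" and eq: "cj x u v i = j" and ne: "x i \<noteq> j" using a puv by auto
    note f = Pset_facts[OF x pin]
    have "(u,v) \<in> {(i, x j), (x j, i), (x i, j), (j, x i)}"
    proof (cases "i = u")
      case True
      then have "cj x u v i = x v" unfolding cj_def using f by (simp add: tr_def)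
      then have "x j = v" using eq fpf_xx[OF x, of v] by simp
      then show ?thesis using True by simp
    next
      case iu: False
      show ?thesis
      proof (cases "i = v")
        case True
        then have "cj x u v i = x u" unfolding cj_def using f iu by (simp add: tr_def)
        then have "x j = u" using eq fpf_xx[OF x, of u] by simp
        then show ?thesis using True by simp
      next
        case iv: False
        then have ci: "cj x u v i = tr u v (x i)" unfolding cj_def using iu by (simp add: tr_def)
        show ?thesis
        proof (cases "x i = u")
          case True
          then have "j = v" using ci eq by (simp add: tr_def)
          then show ?thesis using True by simp
        next
          case False
          show ?thesis
          proof (cases "x i = v")
            case True
            then have "j = u" using ci eq f by (simp add: tr_def)
            then show ?thesis using True by simp
          next
            case False
            then have "cj x u v i = x i" using ci \<open>x i \<noteq> u\<close> by (simp add: tr_def)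
            then show ?thesis using eq ne by simp
          qed
        qed
      qed
    qed
    then show "p \<in> set [(i, x j), (x j, i), (x i, j), (j, x i)]" using puv by simp
  qed
  have "card {p \<in> Pset n x. cj x (fst p) (snd p) i = j \<and> x i \<noteq> j} \<le> card (set [(i, x j), (x j, i), (x i, j), (j, x i)])"
    by (rule card_mono[OF _ sub]) simp
  also have "\<dots> \<le> 4" using card_length[of "[(i, x j), (x j, i), (x i, j), (j, x i)]"] by simp
  finally show ?thesis .
qed

lemma finite_Pset: "finite (Pset n x)"
proof -
  have "Pset n x \<subseteq> {1..n} \<times> {1..n}" by (auto simp: Pset_def)
  then show ?thesis by (rule finite_subset) simp
qed

lemma card_odd: "card {u \<in> {1..2*t}. odd u} = t"
proof -
  have "{u \<in> {1..2*t}. odd u} = (\<lambda>k. 2*k+1) ` {..<t}"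
  proof (rule set_eqI, rule iffI)
    fix u assume "u \<in> {u \<in> {1..2*t}. odd u}"
    then have "u = 2*(u div 2)+1" "u div 2 < t" by auto presburger+
    then show "u \<in> (\<lambda>k. 2*k+1) ` {..<t}" by (metis imageI lessThan_iff)
  qed auto
  moreover have "inj_on (\<lambda>k::nat. 2*k+1) {..<t}" by (auto simp: inj_on_def)
  ultimately show ?thesis by (simp add: card_image)
qed

lemma card_even: "card {u \<in> {1..2*t}. even u} = t"
proof -
  have "{u \<in> {1..2*t}. even u} = (\<lambda>k. 2*k+2) ` {..<t}"
  proof (rule set_eqI, rule iffI)
    fix u assume "u \<in> {u \<in> {1..2*t}. even u}"
    then have a: "1 \<le> u" "u \<le> 2*t" "even u" by auto
    have "u = 2*(u div 2 - 1)+2" using a by presburger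
    moreover have "u div 2 - 1 < t" using a by presburger
    ultimately show "u \<in> (\<lambda>k. 2*k+2) ` {..<t}" by (metis imageI lessThan_iff)
  qed auto
  moreover have "inj_on (\<lambda>k::nat. 2*k+2) {..<t}" by (auto simp: inj_on_def)
  ultimately show ?thesis by (simp add: card_image)
qed

lemma card_Pset:
  assumes "n = 2*t"
  shows "card (Pset n x) \<ge> t * (t - 1)"
proof -
  let ?O = "{u \<in> {1..2*t}. odd u}" and ?E = "{u \<in> {1..2*t}. even u}"
  have eq: "Pset n x = Sigma ?O (\<lambda>u. ?E - {x u})" using assms unfolding Pset_def by auto
  have c: "card (Pset n x) = (\<Sum>u\<in>?O. card (?E - {x u}))"
    unfolding eq by (rule card_SigmaI) auto
  have m: "(\<Sum>u\<in>?O. t - 1) \<le> (\<Sum>u\<in>?O. card (?E - {x u}))"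
  proof (rule sum_mono)
    fix u
    have "card ?E - card {x u} \<le> card (?E - {x u})" by (rule diff_card_le_card_Diff) simp
    then show "t - 1 \<le> card (?E - {x u})" unfolding card_even by simp
  qed
  have "(\<Sum>u\<in>?O. t - 1) = t * (t - 1)" unfolding sum_constant card_odd by simp
  then show ?thesis using c m by linarith
qed



definition cjp :: "(nat \<Rightarrow> nat) \<Rightarrow> nat \<times> nat \<Rightarrow> nat \<Rightarrow> nat" where
  "cjp x p = cj x (fst p) (snd p)"

definition ee :: "nat \<Rightarrow> (nat \<Rightarrow> nat) \<Rightarrow> nat \<Rightarrow> nat \<Rightarrow> real" where
  "ee n x i j = (if perm_matrix x i j then 1 / sqrt n else sqrt n)"

definition F1 :: "nat \<Rightarrow> ((nat \<Rightarrow> nat) \<Rightarrow> nat \<Rightarrow> nat \<Rightarrow> real) \<Rightarrow> (nat \<Rightarrow> nat) \<Rightarrow> (nat \<Rightarrow> nat) \<Rightarrow> nat \<Rightarrow> nat \<Rightarrow> real" where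
  "F1 n B x y i j = (if perm_matrix x i j = perm_matrix y i j then 0
      else if perm_matrix x i j then B x i j / sqrt n else sqrt n * B x i j)"

lemma ee_pos: "n > 0 \<Longrightarrow> ee n x i j > 0"
  by (simp add: ee_def)

lemma term_split:
  assumes "n > 0"
  shows "(if perm_matrix x i j = perm_matrix y i j then 0 else ee n x i j * B x i j + B y i j / ee n x i j)
     = F1 n B x y i j + F1 n B y x i j"
  using assms by (auto simp: ee_def F1_def)

lemma sum_if_const:
  assumes "finite A"
  shows "(\<Sum>p\<in>A. if C p then (c::real) else 0) = real (card {p\<in>A. C p}) * c"
  using assms by (simp add: sum.inter_filter[symmetric])

lemma F1_sum_bound:
  assumes x: "fpf_involution n x" and n: "n > 0" and B: "B x i j \<ge> 0"
  shows "(\<Sum>p\<in>Pset n x. F1 n B x (cjp x p) i j) \<le> 4 * sqrt n * B x i j"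
proof (cases "perm_matrix x i j")
  case True
  then have xi: "x i = j" by (simp add: perm_matrix_def)
  have "(\<Sum>p\<in>Pset n x. F1 n B x (cjp x p) i j) = (\<Sum>p\<in>Pset n x. if cjp x p i \<noteq> x i then B x i j / sqrt n else 0)"
    using True xi by (intro sum.cong refl) (auto simp: F1_def perm_matrix_def)
  also have "\<dots> = real (card {p\<in>Pset n x. cjp x p i \<noteq> x i}) * (B x i j / sqrt n)"
    by (rule sum_if_const[OF finite_Pset])
  also have "\<dots> \<le> real (4 * n) * (B x i j / sqrt n)"
  proof (rule mult_right_mono)
    show "real (card {p\<in>Pset n x. cjp x p i \<noteq> x i}) \<le> real (4 * n)"
      using C1[OF x, of i] unfolding cjp_def by linarith
    show "0 \<le> B x i j / sqrt n" using B by simp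
  qed
  also have "\<dots> = 4 * sqrt n * B x i j"
  proof -
    have "real n = sqrt n * sqrt n" by simp
    then show ?thesis using n by (simp add: field_simps)
  qed
  finally show ?thesis .
next
  case False
  then have xi: "x i \<noteq> j" by (simp add: perm_matrix_def)
  have "(\<Sum>p\<in>Pset n x. F1 n B x (cjp x p) i j) = (\<Sum>p\<in>Pset n x. if cjp x p i = j \<and> x i \<noteq> j then sqrt n * B x i j else 0)"
    using False xi by (intro sum.cong refl) (auto simp: F1_def perm_matrix_def)
  also have "\<dots> = real (card {p\<in>Pset n x. cjp x p i = j \<and> x i \<noteq> j}) * (sqrt n * B x i j)"
    by (rule sum_if_const[OF finite_Pset])
  also have "\<dots> \<le> real 4 * (sqrt n * B x i j)"
  proof (rule mult_right_mono)
    show "real (card {p\<in>Pset n x. cjp x p i = j \<and> x i \<noteq> j}) \<le> real 4"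
      using C2[OF x, of i j] unfolding cjp_def by linarith
    show "0 \<le> sqrt n * B x i j" using B by simp
  qed
  finally show ?thesis by simp
qed

lemma fpf_finite: "finite {x. fpf_involution n x}"
proof -
  have "{x. fpf_involution n x} \<subseteq> {p. p permutes {1..n}}" using fpf_perm by blast
  then show ?thesis by (rule finite_subset) (simp add: finite_permutations)
qed

lemma sum_step_bound:
  assumes n: "n > 0"
    and Bnn: "\<And>x i j. B x i j \<ge> 0"
    and Bsum: "\<And>x. fpf_involution n x \<Longrightarrow> (\<Sum>i\<in>{1..n}. \<Sum>j\<in>{1..n}. B x i j) = 1"
  shows "(\<Sum>q\<in>Sigma {x. fpf_involution n x} (Pset n). \<Sum>i\<in>{1..n}. \<Sum>j\<in>{1..n}.
           (if perm_matrix (fst q) i j = perm_matrix (cjp (fst q) (snd q)) i j then 0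
            else ee n (fst q) i j * B (fst q) i j + B (cjp (fst q) (snd q)) i j / ee n (fst q) i j))
     \<le> 8 * sqrt n * card {x. fpf_involution n x}"
proof -
  let ?X = "{x. fpf_involution n x}"
  let ?Q = "Sigma ?X (Pset n)"
  let ?g = "\<lambda>q. \<Sum>i\<in>{1..n}. \<Sum>j\<in>{1..n}. F1 n B (fst q) (cjp (fst q) (snd q)) i j"
  let ?h = "\<lambda>q. \<Sum>i\<in>{1..n}. \<Sum>j\<in>{1..n}. F1 n B (cjp (fst q) (snd q)) (fst q) i j"
  define \<phi> where "\<phi> q = (cjp (fst q) (snd q), snd q)" for q :: "(nat \<Rightarrow> nat) \<times> (nat \<times> nat)"
  have finQ: "finite ?Q" using fpf_finite finite_Pset by blast
  have eq1: "(\<Sum>q\<in>?Q. \<Sum>i\<in>{1..n}. \<Sum>j\<in>{1..n}.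
           (if perm_matrix (fst q) i j = perm_matrix (cjp (fst q) (snd q)) i j then 0
            else ee n (fst q) i j * B (fst q) i j + B (cjp (fst q) (snd q)) i j / ee n (fst q) i j))
      = (\<Sum>q\<in>?Q. ?g q) + (\<Sum>q\<in>?Q. ?h q)"
    by (simp add: term_split[OF n] sum.distrib)
  have inv: "\<phi> (\<phi> q) = q \<and> \<phi> q \<in> ?Q \<and> ?g (\<phi> q) = ?h q" if q: "q \<in> ?Q" for q
  proof -
    obtain x p where qp: "q = (x, p)" by (metis surj_pair)
    obtain u v where p: "p = (u, v)" by (metis surj_pair)
    have x: "fpf_involution n x" and pin: "(u,v) \<in> Pset n x" using q qp p by auto
    note f = Pset_facts[OF x pin]
    have 1: "\<phi> (\<phi> q) = q" unfolding \<phi>_def cjp_def using qp p by (simp add: cj_cj)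
    have 2: "\<phi> q \<in> ?Q" unfolding \<phi>_def cjp_def using qp p cj_fpf[OF x f(1) f(2)] cj_Pset[OF x pin] by simp
    have 3: "?g (\<phi> q) = ?h q" unfolding \<phi>_def cjp_def using qp p by (simp add: cj_cj)
    show ?thesis using 1 2 3 by blast
  qed
  have hg: "(\<Sum>q\<in>?Q. ?h q) = (\<Sum>q\<in>?Q. ?g q)"
    apply (rule sum.reindex_bij_witness[where i=\<phi> and j=\<phi>])
    using inv by blast+
  have gx: "(\<Sum>p\<in>Pset n x. ?g (x, p)) \<le> 4 * sqrt n" if x: "fpf_involution n x" for x
  proof -
    have "(\<Sum>p\<in>Pset n x. ?g (x, p)) = (\<Sum>i\<in>{1..n}. \<Sum>j\<in>{1..n}. \<Sum>p\<in>Pset n x. F1 n B x (cjp x p) i j)"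
      by (simp add: sum.swap[of _ "Pset n x"])
    also have "\<dots> \<le> (\<Sum>i\<in>{1..n}. \<Sum>j\<in>{1..n}. 4 * sqrt n * B x i j)"
      by (intro sum_mono F1_sum_bound[OF x n Bnn])
    also have "\<dots> = 4 * sqrt n * (\<Sum>i\<in>{1..n}. \<Sum>j\<in>{1..n}. B x i j)"
      by (simp add: sum_distrib_left)
    also have "\<dots> = 4 * sqrt n" using Bsum[OF x] by simp
    finally show ?thesis .
  qed
  have "(\<Sum>x\<in>?X. \<Sum>p\<in>Pset n x. ?g (x, p)) = (\<Sum>(x,p)\<in>?Q. ?g (x, p))"
    by (rule sum.Sigma) (auto simp: fpf_finite finite_Pset)
  also have "\<dots> = (\<Sum>q\<in>?Q. ?g q)" by (rule sum.cong) auto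
  finally have "(\<Sum>q\<in>?Q. ?g q) = (\<Sum>x\<in>?X. \<Sum>p\<in>Pset n x. ?g (x, p))" by simp
  also have "\<dots> \<le> (\<Sum>x\<in>?X. 4 * sqrt n)"
    by (intro sum_mono gx) simp
  also have "\<dots> = 4 * sqrt n * card ?X" by simp
  finally have "(\<Sum>q\<in>?Q. ?g q) \<le> 4 * sqrt n * card ?X" .
  then show ?thesis unfolding eq1 hg by simp
qed



lemma fin_qc: "finite (qcarrier n m)"
  by (simp add: qcarrier_def)

lemma qa_unitary: "query_algorithm n m T U \<Longrightarrow> k \<le> T \<Longrightarrow> unitary_on (qcarrier n m) (U k)"
  by (simp add: query_algorithm_def)

lemma ip_basis: "s0 \<in> S \<Longrightarrow> finite S \<Longrightarrow> ip S (basis_vec s0) (basis_vec s0) = 1"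
  unfolding ip_def basis_vec_def by (simp add: if_distrib cong: if_cong)

lemma run_norm:
  assumes qa: "query_algorithm n m T U" and e0: "(1,1,False,0) \<in> qcarrier n m" and k: "k \<le> T"
  shows "ip (qcarrier n m) (run (qcarrier n m) U x k) (run (qcarrier n m) U x k) = 1"
  using k
proof (induction k)
  case 0
  show ?case using ip_apply_op[OF qa_unitary[OF qa, of 0] fin_qc] ip_basis[OF e0 fin_qc] by simp
next
  case (Suc k)
  then have "k \<le> T" by simp
  then show ?case using Suc ip_apply_op[OF qa_unitary[OF qa Suc.prems] fin_qc] by (simp add: ip_query_same)
qed

lemma run_sumsq:
  assumes qa: "query_algorithm n m T U" and e0: "(1,1,False,0) \<in> qcarrier n m" and k: "k \<le> T"
  shows "(\<Sum>s\<in>qcarrier n m. (cmod (run (qcarrier n m) U x k s))^2) = 1"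
  using run_norm[OF qa e0 k, of x] unfolding ip_self by (simp only: of_real_eq_1_iff)

lemma run_step:
  assumes qa: "query_algorithm n m T U" and k: "Suc k \<le> T" and e: "\<And>i j. e i j > 0"
  shows "cmod (ip (qcarrier n m) (run (qcarrier n m) U x k) (run (qcarrier n m) U y k))
     - (\<Sum>i\<in>{1..n}. \<Sum>j\<in>{1..n}. if perm_matrix x i j = perm_matrix y i j then 0
          else e i j * blk m (run (qcarrier n m) U x k) i j + blk m (run (qcarrier n m) U y k) i j / e i j)
     \<le> cmod (ip (qcarrier n m) (run (qcarrier n m) U x (Suc k)) (run (qcarrier n m) U y (Suc k)))"
proof -
  let ?S = "qcarrier n m"
  let ?a = "ip ?S (run ?S U x k) (run ?S U y k)"
  let ?b = "ip ?S (query_op x (run ?S U x k)) (query_op y (run ?S U y k))"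
  have eq: "ip ?S (run ?S U x (Suc k)) (run ?S U y (Suc k)) = ?b"
    using ip_apply_op[OF qa_unitary[OF qa k] fin_qc] by simp
  have "cmod ?a - cmod ?b \<le> cmod (?a - ?b)" by (rule norm_triangle_ineq2)
  also have "\<dots> = cmod (?b - ?a)" by (rule norm_minus_commute)
  also have "\<dots> \<le> (\<Sum>i\<in>{1..n}. \<Sum>j\<in>{1..n}. if perm_matrix x i j = perm_matrix y i j then 0
          else e i j * blk m (run ?S U x k) i j + blk m (run ?S U y k) i j / e i j)"
    by (rule query_diff[OF e])
  finally show ?thesis unfolding eq by linarith
qed

definition x0 :: "nat \<Rightarrow> nat \<Rightarrow> nat" where
  "x0 n i = (if i \<in> {1..n} then (if odd i then i + 1 else i - 1) else i)"

lemma x0_fpf: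
  assumes "even n"
  shows "fpf_involution n (x0 n)"
proof -
  have in_n: "x0 n i \<in> {1..n}" if "i \<in> {1..n}" for i
    using that assms unfolding x0_def by (auto; presburger)
  have inv: "x0 n (x0 n i) = i" for i
  proof (cases "i \<in> {1..n}")
    case True
    then show ?thesis using assms unfolding x0_def by (auto; presburger)
  next
    case False
    then have "x0 n i = i" unfolding x0_def by auto
    then show ?thesis by simp
  qed
  have ne: "x0 n i \<noteq> i" if "i \<in> {1..n}" for i
    using that unfolding x0_def by auto
  have perm: "x0 n permutes {1..n}"
    unfolding permutes_def
  proof (intro conjI allI)
    show "x \<notin> {1..n} \<longrightarrow> x0 n x = x" for x unfolding x0_def by simp
    show "\<exists>!x. x0 n x = y" for y
    proof
      show "x0 n (x0 n y) = y" by (rule inv)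
      show "a = x0 n y" if "x0 n a = y" for a using inv[of a] that by simp
    qed
  qed
  show ?thesis unfolding fpf_involution_def using perm inv ne by blast
qed



lemma main_bound:
  assumes n4: "n \<ge> 4" and ev: "even n" and qa: "query_algorithm n m T U"
    and succ: "\<forall>\<sigma>. fpf_involution n \<sigma> \<longrightarrow> success_prob n m T U f \<sigma> \<ge> 2/3"
  shows "real n * sqrt n \<le> 1280 * real T"
proof -
  define S where "S = qcarrier n m"
  define X where "X = {x. fpf_involution n x}"
  define Q where "Q = Sigma X (Pset n)"
  define st where "st x k = run S U x k" for x k
  define W where "W k = (\<Sum>q\<in>Q. cmod (ip S (st (fst q) k) (st (cjp (fst q) (snd q)) k)))" for k
  obtain t where t: "n = 2 * t" using ev by blast
  have npos: "n > 0" using n4 by simp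
  have finX: "finite X" unfolding X_def by (rule fpf_finite)
  have x0X: "x0 n \<in> X" unfolding X_def using x0_fpf[OF ev] by simp
  have cardX: "card X > 0" using finX x0X card_gt_0_iff by blast
  have finS: "finite S" unfolding S_def by (rule fin_qc)
  have finQ: "finite Q" unfolding Q_def using finX finite_Pset by blast
  have mpos: "m > 0"
  proof (rule ccontr)
    assume "\<not> m > 0"
    then have "qcarrier n m = {}" by (simp add: qcarrier_def)
    then have "success_prob n m T U f (x0 n) = 0" by (simp add: success_prob_def)
    then show False using succ x0_fpf[OF ev] by force
  qed
  have e0: "(1,1,False,0) \<in> qcarrier n m" using mpos npos by (simp add: qcarrier_def)
  have sumsq: "(\<Sum>s\<in>S. (cmod (st x k s))^2) = 1" if "k \<le> T" for x k
    unfolding S_def st_def by (rule run_sumsq[OF qa e0 that])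
  have W0: "W 0 = card Q"
  proof -
    have "ip S (st x 0) (st y 0) = 1" for x y
    proof -
      have "st y 0 = st x 0" by (simp add: st_def)
      then show ?thesis using run_norm[OF qa e0, of 0 x] unfolding st_def S_def by simp
    qed
    then show ?thesis unfolding W_def by simp
  qed
  have Wstep: "W k - 8 * sqrt n * card X \<le> W (Suc k)" if k: "Suc k \<le> T" for k
  proof -
    define B where "B x i j = blk m (st x k) i j" for x i j
    let ?term = "\<lambda>q. \<Sum>i\<in>{1..n}. \<Sum>j\<in>{1..n}.
           (if perm_matrix (fst q) i j = perm_matrix (cjp (fst q) (snd q)) i j then 0
            else ee n (fst q) i j * B (fst q) i j + B (cjp (fst q) (snd q)) i j / ee n (fst q) i j)"
    have Bsum: "(\<Sum>i\<in>{1..n}. \<Sum>j\<in>{1..n}. B x i j) = 1" if "fpf_involution n x" for x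
      unfolding B_def sum_blk using sumsq[of k x] k unfolding S_def by simp
    have Bnn: "\<And>x i j. 0 \<le> B x i j" unfolding B_def by (rule blk_nonneg)
    have sb: "(\<Sum>q\<in>Q. ?term q) \<le> 8 * sqrt n * card X"
      unfolding Q_def X_def by (rule sum_step_bound[OF npos Bnn Bsum])
    have "W k - (\<Sum>q\<in>Q. ?term q) = (\<Sum>q\<in>Q. cmod (ip S (st (fst q) k) (st (cjp (fst q) (snd q)) k)) - ?term q)"
      unfolding W_def by (simp add: sum_subtractf)
    also have "\<dots> \<le> W (Suc k)"
      unfolding W_def
    proof (rule sum_mono)
      fix q
      show "cmod (ip S (st (fst q) k) (st (cjp (fst q) (snd q)) k)) - ?term q
          \<le> cmod (ip S (st (fst q) (Suc k)) (st (cjp (fst q) (snd q)) (Suc k)))"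
        unfolding S_def st_def B_def
        by (rule run_step[OF qa k ee_pos[OF npos]])
    qed
    finally show ?thesis using sb by linarith
  qed
  have Wk: "W 0 - real k * (8 * sqrt n * card X) \<le> W k" if "k \<le> T" for k
    using that
  proof (induction k)
    case 0 then show ?case by simp
  next
    case (Suc k)
    then have "W 0 - real k * (8 * sqrt n * card X) \<le> W k" by simp
    moreover have "W k - 8 * sqrt n * card X \<le> W (Suc k)" using Wstep Suc.prems by blast
    ultimately show ?case by (simp add: algebra_simps)
  qed
  have WT: "W T \<le> 19/20 * card Q"
  proof -
    have "W T \<le> (\<Sum>q\<in>Q. 19/20)"
      unfolding W_def
    proof (rule sum_mono)
      fix q assume q: "q \<in> Q"
      obtain x u v where qp: "q = (x, (u, v))" by (metis surj_pair)
      have x: "fpf_involution n x" and pin: "(u,v) \<in> Pset n x" using q qp unfolding Q_def X_def by auto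
      define y where "y = cj x u v"
      have y: "fpf_involution n y" unfolding y_def using cj_fpf[OF x] Pset_facts[OF x pin] by blast
      define A where "A = {s \<in> S. \<forall>i\<in>{1..n}. f s i = descriptor x i}"
      define B where "B = {s \<in> S. \<forall>i\<in>{1..n}. f s i = descriptor y i}"
      have AS: "A \<subseteq> S" and BS: "B \<subseteq> S" unfolding A_def B_def by auto
      have pa: "(\<Sum>s\<in>A. (cmod (st x T s))^2) \<ge> 2/3"
        using succ x unfolding A_def st_def S_def success_prob_def by simp
      have pB: "(\<Sum>s\<in>B. (cmod (st y T s))^2) \<ge> 2/3"
        using succ y unfolding B_def st_def S_def success_prob_def by simp
      have disj: "A \<subseteq> S - B"
      proof
        fix s assume s: "s \<in> A"
        have "s \<notin> B"
        proof
          assume "s \<in> B"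
          then have "f s (x u) = descriptor y (x u)" using cj_desc(1)[OF x pin] unfolding B_def by blast
          moreover have "f s (x u) = descriptor x (x u)" using s cj_desc(1)[OF x pin] unfolding A_def by blast
          ultimately show False using cj_desc(2)[OF x pin] unfolding y_def by simp
        qed
        then show "s \<in> S - B" using s AS by blast
      qed
      have "(\<Sum>s\<in>A. (cmod (st y T s))^2) \<le> (\<Sum>s\<in>S - B. (cmod (st y T s))^2)"
        by (rule sum_mono2) (use finS disj in auto)
      also have "\<dots> = 1 - (\<Sum>s\<in>B. (cmod (st y T s))^2)"
        using sum_diff[OF finS BS, of "\<lambda>s. (cmod (st y T s))^2"] sumsq[of T y] by simp
      finally have pb: "(\<Sum>s\<in>A. (cmod (st y T s))^2) \<le> 1/3" using pB by linarith
      have "cmod (ip S (st x T) (st y T)) \<le> 19/20"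
        by (rule final_bound[OF finS AS sumsq[OF order_refl] sumsq[OF order_refl] pa pb])
      then show "cmod (ip S (st (fst q) T) (st (cjp (fst q) (snd q)) T)) \<le> 19/20"
        using qp unfolding y_def cjp_def by simp
    qed
    then show ?thesis by simp
  qed
  have cQ: "card Q \<ge> card X * (t * (t - 1))"
  proof -
    have "card Q = (\<Sum>x\<in>X. card (Pset n x))"
      unfolding Q_def by (rule card_SigmaI[OF finX]) (simp add: finite_Pset)
    also have "\<dots> \<ge> (\<Sum>x\<in>X. t * (t - 1))"
      by (intro sum_mono card_Pset[OF t])
    finally show ?thesis by simp
  qed
  have key: "real (card Q) \<le> 160 * real T * sqrt n * card X"
    using Wk[OF order_refl] WT W0 by (simp add: algebra_simps)
  have t2: "t \<ge> 2" using n4 t by simp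
  have "real (t * (t - 1)) * 8 \<ge> real n ^ 2"
  proof -
    have "real (t * (t - 1)) = real t * (real t - 1)" using t2 by (simp add: of_nat_diff)
    moreover have "real n ^ 2 = (2 * real t)^2" using t by simp
    moreover have "real t * (real t - 1) * 8 - (2 * real t)^2 = 4 * real t * (real t - 2)"
      by (simp add: algebra_simps power2_eq_square)
    moreover have "4 * real t * (real t - 2) \<ge> 0" using t2 by simp
    ultimately show ?thesis by linarith
  qed
  then have "real (card X) * real n ^ 2 \<le> real (card X) * (real (t * (t - 1)) * 8)"
    by (simp add: mult_left_mono)
  also have "\<dots> \<le> real (card Q) * 8"
  proof -
    have h: "real (card X) * real (t * (t - 1)) \<le> real (card Q)" using cQ by (metis of_nat_le_iff of_nat_mult)
    show ?thesis unfolding mult.assoc[symmetric] by (rule mult_right_mono[OF h]) simp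
  qed
  also have "\<dots> \<le> real (card X) * (1280 * real T * sqrt n)" using key by (simp add: algebra_simps)
  finally have "real n ^ 2 \<le> 1280 * real T * sqrt n" using cardX by simp
  moreover have "real n ^ 2 = (real n * sqrt n) * sqrt n" by (simp add: power2_eq_square mult.assoc)
  ultimately have "(real n * sqrt n) * sqrt n \<le> (1280 * real T) * sqrt n" by simp
  moreover have "sqrt n > 0" using npos by simp
  ultimately show ?thesis by simp
qed


lemma powr_three_halves: "real n powr (3/2) = real n * sqrt (real n)"
proof (cases "n = 0")
  case True then show ?thesis by simp
next
  case False
  then have "real n powr (3/2) = real n powr (1 + 1/2)" by simp
  also have "\<dots> = real n powr 1 * real n powr (1/2)" by (rule powr_add)
  also have "\<dots> = real n * sqrt (real n)" using False by (simp add: powr_half_sqrt)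
  finally show ?thesis .
qed

theorem lemma11:
  shows "\<exists>c>0. \<exists>N. \<forall>n\<ge>N. even n \<longrightarrow>
    (\<forall>m T U f.
       query_algorithm n m T U \<and>
       (\<forall>\<sigma>. fpf_involution n \<sigma> \<longrightarrow> success_prob n m T U f \<sigma> \<ge> 2/3)
       \<longrightarrow> real T \<ge> c * real n powr (3/2))"
proof (intro exI[of _ "1/1280"] conjI exI[of _ 4] allI impI)
  show "(0::real) < 1/1280" by simp
  fix n m T U f
  assume n: "4 \<le> n" and ev: "even n"
    and h: "query_algorithm n m T U \<and> (\<forall>\<sigma>. fpf_involution n \<sigma> \<longrightarrow> success_prob n m T U f \<sigma> \<ge> 2/3)"
  have "real n * sqrt n \<le> 1280 * real T"
    using main_bound[OF n ev] h by blast
  then show "1/1280 * real n powr (3/2) \<le> real T" unfolding powr_three_halves by simp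
qed

end
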